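(* Let $X$ be a set and $f=(f_1,\ldots,f_m):X\to\mathbb{R}^m$ a mapping, $M=\{1,\ldots,m\}$. If the free disposal hull $f(X)+\mathbb{R}^m_{\geq0}$ is convex, then the following are equivalent: $(\alpha)$ $\mathrm{WE}(f,X)=\mathrm{E}(f,X)$; $(\beta)$ $\displaystyle\bigcup_{\emptyset\neq I\subseteq M}\mathrm{E}(f_I,X)\subseteq\mathrm{E}(f,X)$.
   Context: Let $M=\{1,\ldots,m\}$. For a nonempty $I\subseteq M$ and $y,y'\in\mathbb{R}^m$: $y\lneq_I y'$ means $y_i\leq y'_i$ for all $i\in I$ and $y_j<y'_j$ for some $j\in I$; $y<_I y'$ means $y_i<y'_i$ for all $i\in I$. For $Y\subseteq\mathbb{R}^m$, $\mathrm{M}_I Y$ (resp. $\mathrm{WM}_I Y$) is the set of all $y'\in Y$ for which there is no $y\in Y$ with $y\lneq_I y'$ (resp. $y<_I y'$). For $f=(f_1,\ldots,f_m):X\to\mathbb{R}^m$ and $I=\{i_1<\cdots<i_k\}$, $f_I=(f_{i_1},\ldots,f_{i_k})$, and $\mathrm{E}(f_I,X)=f^{-1}(\mathrm{M}_I f(X))$ (efficient solutions), $\mathrm{WE}(f_I,X)=f^{-1}(\mathrm{WM}_I f(X))$ (weakly efficient solutions); $\mathrm{E}(f,X)=\mathrm{E}(f_M,X)$, $\mathrm{WE}(f,X)=\mathrm{WE}(f_M,X)$. $\mathbb{R}^m_{\geq0}$ is the nonnegative orthant, and the free disposal hull of $Z\subseteq\mathbb{R}^m$ is $Z+\mathbb{R}^m_{\geq0}$.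 *)

theory Defs
  imports "HOL-Analysis.Analysis"
begin

text \<open>Vectors in R^m are modelled as real ^ 'm with a finite index type 'm;
  the index set M = {1..m} corresponds to UNIV :: 'm set.\<close>

definition lneq_on :: "'m set \<Rightarrow> real ^ 'm \<Rightarrow> real ^ 'm \<Rightarrow> bool" where
  "lneq_on I y y' \<longleftrightarrow> (\<forall>i\<in>I. y $ i \<le> y' $ i) \<and> (\<exists>j\<in>I. y $ j < y' $ j)"

definition lt_on :: "'m set \<Rightarrow> real ^ 'm \<Rightarrow> real ^ 'm \<Rightarrow> bool" where
  "lt_on I y y' \<longleftrightarrow> (\<forall>i\<in>I. y $ i < y' $ i)"

definition min_set :: "'m set \<Rightarrow> (real ^ 'm) set \<Rightarrow> (real ^ 'm) set" where
  "min_set I Y = {y'\<in>Y. \<not> (\<exists>y\<in>Y. lneq_on I y y')}"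

definition wmin_set :: "'m set \<Rightarrow> (real ^ 'm) set \<Rightarrow> (real ^ 'm) set" where
  "wmin_set I Y = {y'\<in>Y. \<not> (\<exists>y\<in>Y. lt_on I y y')}"

definition eff :: "('a \<Rightarrow> real ^ 'm) \<Rightarrow> 'm set \<Rightarrow> 'a set \<Rightarrow> 'a set" where
  "eff f I X = {x\<in>X. f x \<in> min_set I (f ` X)}"

definition weff :: "('a \<Rightarrow> real ^ 'm) \<Rightarrow> 'm set \<Rightarrow> 'a set \<Rightarrow> 'a set" where
  "weff f I X = {x\<in>X. f x \<in> wmin_set I (f ` X)}"

definition nonneg_orthant :: "(real ^ 'm) set" where
  "nonneg_orthant = {d. \<forall>i. 0 \<le> d $ i}"

definition free_disposal_hull :: "(real ^ 'm) set \<Rightarrow> (real ^ 'm) set" where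
  "free_disposal_hull Z = {z + d | z d. z \<in> Z \<and> d \<in> nonneg_orthant}"

end

theory Submission
  imports Defs
begin

lemma eff_sub_weff:
  assumes "I \<noteq> {}"
  shows "eff f I X \<subseteq> weff f UNIV X"
proof
  fix x assume x: "x \<in> eff f I X"
  obtain j where j: "j \<in> I" using assms by blast
  show "x \<in> weff f UNIV X"
  proof -
    have "\<not> lt_on UNIV y (f x)" if "y \<in> f ` X" for y
    proof
      assume "lt_on UNIV y (f x)"
      hence "lneq_on I y (f x)" using j unfolding lt_on_def lneq_on_def
        by (auto intro: less_imp_le)
      thus False using x that unfolding eff_def min_set_def by blast
    qed
    thus ?thesis using x unfolding eff_def weff_def min_set_def wmin_set_def by blast
  qed
qed

lemma key:
  fixes X :: "'a set" and f :: "'a \<Rightarrow> real ^ 'm"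
  assumes cvx: "convex (free_disposal_hull (f ` X))"
    and x0: "x0 \<in> weff f UNIV X"
  shows "\<exists>I. I \<noteq> {} \<and> x0 \<in> eff f I X"
proof -
  define y where "y = f x0"
  define A where "A = free_disposal_hull (f ` X)"
  define B where "B = {z::real^'m. \<forall>i. z$i < y$i}"
  have x0X: "x0 \<in> X" using x0 unfolding weff_def by blast
  have wm: "\<not> lt_on UNIV (f x) y" if "x \<in> X" for x
    using x0 that unfolding weff_def wmin_set_def y_def by blast
  have Bint: "B = (\<Inter>i. {z. inner (axis i 1) z < y$i})"
    unfolding B_def by (auto simp: inner_axis')
  have cB: "convex B" unfolding Bint by (intro convex_INT allI convex_halfspace_lt)
  have "y - 1 \<in> B" unfolding B_def by simp
  hence Bne: "B \<noteq> {}" by blast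
  have Amem: "f x + d \<in> A" if "x \<in> X" "\<forall>i. 0 \<le> d$i" for x d
    unfolding A_def free_disposal_hull_def nonneg_orthant_def using that by blast
  have "f x0 + 0 \<in> A" by (rule Amem[OF x0X]) simp
  hence Ane: "A \<noteq> {}" by blast
  have disj: "B \<inter> A = {}"
  proof (rule ccontr)
    assume "B \<inter> A \<noteq> {}"
    then obtain z where zB: "z \<in> B" and zA: "z \<in> A" by blast
    from zA obtain x d where "x \<in> X" "\<forall>i. 0 \<le> d$i" "z = f x + d"
      unfolding A_def free_disposal_hull_def nonneg_orthant_def by blast
    hence "lt_on UNIV (f x) y" using zB unfolding B_def lt_on_def
      by (smt (verit) mem_Collect_eq vector_add_component)
    thus False using wm \<open>x \<in> X\<close> by blast
  qed
  obtain a b where a0: "a \<noteq> 0" and aB: "\<forall>z\<in>B. inner a z \<le> b"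
    and aA: "\<forall>w\<in>A. inner a w \<ge> b"
    using separating_hyperplane_sets[OF cB cvx[folded A_def] Bne Ane disj] by blast
  have apos: "a$i \<ge> 0" for i
  proof (rule ccontr)
    assume neg: "\<not> a$i \<ge> 0"
    define t where "t = (inner a (f x0) - b) / (- a$i) + 1"
    have ge: "inner a (f x0) \<ge> b" using aA Amem[OF x0X, of 0] by simp
    have t0: "t \<ge> 0" unfolding t_def using neg ge by (simp add: divide_nonneg_pos)
    have "f x0 + t *\<^sub>R axis i 1 \<in> A"
      by (rule Amem[OF x0X]) (simp add: axis_def t0)
    hence "inner a (f x0 + t *\<^sub>R axis i 1) \<ge> b" using aA by blast
    moreover have "inner a (f x0 + t *\<^sub>R axis i 1) = inner a (f x0) + t * a$i"
      by (simp add: inner_add_right inner_axis)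
    moreover have "t * a$i = -(inner a (f x0) - b) + a$i"
      unfolding t_def using neg by (simp add: field_simps)
    ultimately show False using neg by linarith
  qed
  have ay: "inner a y \<le> b"
  proof (rule ccontr)
    assume "\<not> inner a y \<le> b"
    hence c: "inner a y - b > 0" by simp
    define s where "s = inner a 1"
    have s0: "s \<ge> 0" unfolding s_def inner_vec_def using apos by (simp add: sum_nonneg)
    define e where "e = (inner a y - b) / (s + 1)"
    have e0: "e > 0" unfolding e_def using c s0 by simp
    have "y - e *\<^sub>R 1 \<in> B" unfolding B_def using e0 by simp
    hence "inner a (y - e *\<^sub>R 1) \<le> b" using aB by blast
    moreover have "inner a (y - e *\<^sub>R 1) = inner a y - e * s"
      by (simp add: inner_diff_right s_def)
    moreover have "e * s < inner a y - b"
    proof -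
      have "e * s = (inner a y - b) * (s / (s+1))" unfolding e_def using s0 by (simp add: field_simps)
      also have "\<dots> < (inner a y - b) * 1" using c s0 by (intro mult_strict_left_mono) auto
      finally show ?thesis by simp
    qed
    ultimately show False by linarith
  qed
  define I where "I = {i. a$i > 0}"
  have Ine: "I \<noteq> {}"
  proof
    assume "I = {}"
    hence "\<forall>i. a$i = 0" using apos unfolding I_def by (metis empty_Collect_eq less_eq_real_def)
    hence "a = 0" by (simp add: vec_eq_iff)
    thus False using a0 by simp
  qed
  have "x0 \<in> eff f I X"
  proof -
    have "\<not> lneq_on I (f x) y" if xX: "x \<in> X" for x
    proof
      assume ln: "lneq_on I (f x) y"
      have "(\<Sum>i\<in>UNIV. a$i * f x $ i) < (\<Sum>i\<in>UNIV. a$i * y $ i)"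
      proof (rule sum_strict_mono_ex1)
        show "\<forall>i\<in>UNIV. a$i * f x $ i \<le> a$i * y $ i"
        proof
          fix i :: 'm
          show "a$i * f x $ i \<le> a$i * y $ i"
          proof (cases "i \<in> I")
            case True thus ?thesis using ln apos unfolding lneq_on_def
              by (simp add: mult_left_mono)
          next
            case False hence "a$i = 0" using apos[of i] unfolding I_def by simp
            thus ?thesis by simp
          qed
        qed
        from ln obtain j where "j \<in> I" "f x $ j < y $ j" unfolding lneq_on_def by blast
        hence "a$j * f x $ j < a$j * y $ j" unfolding I_def by (simp add: mult_strict_left_mono)
        thus "\<exists>i\<in>UNIV. a$i * f x $ i < a$i * y $ i" by blast
      qed simp
      hence "inner a (f x) < inner a y" by (simp add: inner_vec_def)
      moreover have "inner a (f x) \<ge> b" using aA Amem[OF xX, of 0] by simp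
      ultimately show False using ay by linarith
    qed
    thus ?thesis using x0X unfolding eff_def min_set_def y_def by blast
  qed
  thus ?thesis using Ine by blast
qed

theorem proposition2p3:
  fixes X :: "'a set" and f :: "'a \<Rightarrow> real ^ 'm"
  assumes "convex (free_disposal_hull (f ` X))"
  shows "weff f UNIV X = eff f UNIV X \<longleftrightarrow>
         (\<Union>I\<in>{I. I \<noteq> {}}. eff f I X) \<subseteq> eff f UNIV X"
proof
  assume e: "weff f UNIV X = eff f UNIV X"
  show "(\<Union>I\<in>{I. I \<noteq> {}}. eff f I X) \<subseteq> eff f UNIV X"
  proof
    fix x assume "x \<in> (\<Union>I\<in>{I. I \<noteq> {}}. eff f I X)"
    then obtain I where I: "I \<noteq> {}" "x \<in> eff f I X" by blast
    have "x \<in> weff f UNIV X" using subsetD[OF eff_sub_weff[OF I(1)] I(2)] .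
    thus "x \<in> eff f UNIV X" using e by simp
  qed
next
  assume h: "(\<Union>I\<in>{I. I \<noteq> {}}. eff f I X) \<subseteq> eff f UNIV X"
  show "weff f UNIV X = eff f UNIV X"
  proof
    show "weff f UNIV X \<subseteq> eff f UNIV X"
    proof
      fix x assume "x \<in> weff f UNIV X"
      then obtain I where I: "I \<noteq> {}" "x \<in> eff f I X" using key[OF assms] by blast
      have "x \<in> (\<Union>I\<in>{I. I \<noteq> {}}. eff f I X)" using I by blast
      thus "x \<in> eff f UNIV X" using h by (rule subsetD[rotated])
    qed
    show "eff f UNIV X \<subseteq> weff f UNIV X" by (rule eff_sub_weff) simp
  qed
qed

end
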